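(* For every finitary Boolean function $f$ and every $k\in\mathbb N$, $$E_f(k)=\sum_{S\subset\mathbb N,\,|S|=k}\widehat f(S)^2\le\delta_f\,k\,\|f\|_2^2.$$
   Context: Let $\Omega=\{-1,1\}$ and $\Omega^\infty=\{-1,1\}^{\mathbb N}$ with the uniform product probability measure; $\omega$ denotes a uniformly random element. A Boolean function is a measurable map $f:\Omega^\infty\to\Omega$. For finite $S\subset\mathbb N$, $\chi_S(\omega)=\prod_{i\in S}\omega_i$, $\widehat f(S)=\mathbb E[f\chi_S]$; sums over $S$ range over finite subsets. A set $W\subseteq\mathbb N$ is a witness set for $f$ at $\omega$ if there is an event $A$ with $\mathbb P(A)=1$ such that for all $\tilde\omega\in A$: if $\tilde\omega_i=\omega_i$ for all $i\in W$ then $f(\tilde\omega)=f(\omega)$. $f$ is finitary if almost surely a finite witness set exists. A (randomised) algorithm $A$ for a finitary $f$ queries bits of $\omega$ one at a time, each next index chosen as a function of the bits queried so far and independent auxiliary randomness, and stops once the set of queried bits is a witness set for $f$ at $\omega$; it must query almost surely only finitely many bits. $W(A)$ is the set of queried bits. The revealment of $f$ is $\delta_f=\inf_A\sup_i\mathbb P(i\in W(A))$ over all such algorithms. *)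

theory Defs
  imports "HOL-Probability.Probability"
begin

text \<open>Bits are encoded as booleans; the value in \<open>{-1,1}\<close> of a bit is \<open>sgnb\<close>.\<close>
definition sgnb :: "bool \<Rightarrow> real" where
  "sgnb b = (if b then 1 else -1)"

definition coin :: "bool measure" where
  "coin = measure_pmf (pmf_of_set UNIV)"

definition Cube :: "(nat \<Rightarrow> bool) measure" where
  "Cube = PiM UNIV (\<lambda>_. coin)"

definition boolean_function :: "((nat \<Rightarrow> bool) \<Rightarrow> real) \<Rightarrow> bool" where
  "boolean_function f \<longleftrightarrow> f \<in> borel_measurable Cube \<and> (\<forall>\<omega>. f \<omega> \<in> {-1, 1})"

definition chi :: "nat set \<Rightarrow> (nat \<Rightarrow> bool) \<Rightarrow> real" where
  "chi S \<omega> = (\<Prod>i\<in>S. sgnb (\<omega> i))"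

definition fourier :: "((nat \<Rightarrow> bool) \<Rightarrow> real) \<Rightarrow> nat set \<Rightarrow> real" where
  "fourier f S = (\<integral>\<omega>. f \<omega> * chi S \<omega> \<partial>Cube)"

definition witness :: "((nat \<Rightarrow> bool) \<Rightarrow> real) \<Rightarrow> nat set \<Rightarrow> (nat \<Rightarrow> bool) \<Rightarrow> bool" where
  "witness f W \<omega> \<longleftrightarrow> (\<exists>A\<in>sets Cube. measure Cube A = 1 \<and>
      (\<forall>\<omega>'\<in>A. (\<forall>i\<in>W. \<omega>' i = \<omega> i) \<longrightarrow> f \<omega>' = f \<omega>))"

definition finitary :: "((nat \<Rightarrow> bool) \<Rightarrow> real) \<Rightarrow> bool" where
  "finitary f \<longleftrightarrow> (AE \<omega> in Cube. \<exists>W. finite W \<and> witness f W \<omega>)"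

text \<open>A randomised algorithm: \<open>nx r h\<close> is the next index to query, given the auxiliary
  randomness \<open>r\<close> (an independent sequence of fair coins) and the history \<open>h\<close> of
  (index, value) pairs queried so far.\<close>
type_synonym algorithm = "(nat \<Rightarrow> bool) \<Rightarrow> (nat \<times> bool) list \<Rightarrow> nat"

fun hist :: "algorithm \<Rightarrow> (nat \<Rightarrow> bool) \<Rightarrow> (nat \<Rightarrow> bool) \<Rightarrow> nat \<Rightarrow> (nat \<times> bool) list" where
  "hist nx r \<omega> 0 = []"
| "hist nx r \<omega> (Suc n) = (let h = hist nx r \<omega> n; i = nx r h in h @ [(i, \<omega> i)])"

definition queried :: "algorithm \<Rightarrow> (nat \<Rightarrow> bool) \<Rightarrow> (nat \<Rightarrow> bool) \<Rightarrow> nat \<Rightarrow> nat set" where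
  "queried nx r \<omega> n = fst ` set (hist nx r \<omega> n)"

definition stop_time :: "((nat \<Rightarrow> bool) \<Rightarrow> real) \<Rightarrow> algorithm \<Rightarrow> (nat \<Rightarrow> bool) \<Rightarrow> (nat \<Rightarrow> bool) \<Rightarrow> nat" where
  "stop_time f nx r \<omega> = (LEAST n. witness f (queried nx r \<omega> n) \<omega>)"

definition revealed :: "((nat \<Rightarrow> bool) \<Rightarrow> real) \<Rightarrow> algorithm \<Rightarrow> (nat \<Rightarrow> bool) \<Rightarrow> (nat \<Rightarrow> bool) \<Rightarrow> nat set" where
  "revealed f nx r \<omega> = queried nx r \<omega> (stop_time f nx r \<omega>)"

text \<open>Joint space of auxiliary randomness and input.\<close>
definition Joint :: "((nat \<Rightarrow> bool) \<times> (nat \<Rightarrow> bool)) measure" where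
  "Joint = Cube \<Otimes>\<^sub>M Cube"

definition valid_algorithm :: "((nat \<Rightarrow> bool) \<Rightarrow> real) \<Rightarrow> algorithm \<Rightarrow> bool" where
  "valid_algorithm f nx \<longleftrightarrow>
     (\<forall>h. (\<lambda>r. nx r h) \<in> measurable Cube (count_space UNIV)) \<and>
     (AE p in Joint. \<exists>n. witness f (queried nx (fst p) (snd p) n) (snd p)) \<and>
     (\<forall>i. {p \<in> space Joint. i \<in> revealed f nx (fst p) (snd p)} \<in> sets Joint)"

definition revealment :: "((nat \<Rightarrow> bool) \<Rightarrow> real) \<Rightarrow> real" where
  "revealment f = (INF nx \<in> {nx. valid_algorithm f nx}.
      SUP i. measure Joint {p \<in> space Joint. i \<in> revealed f nx (fst p) (snd p)})"

end

theory Submission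
  imports Defs
begin

lemma space_coin[simp]: "space coin = UNIV" by (simp add: coin_def)
lemma sets_coin[simp]: "sets coin = UNIV" by (simp add: coin_def)
lemma prob_coin: "prob_space coin" by (simp add: coin_def prob_space_measure_pmf)
lemma space_Cube[simp]: "space Cube = UNIV" by (simp add: Cube_def space_PiM)
lemma prob_Cube: "prob_space Cube" unfolding Cube_def by (rule prob_space_PiM) (simp add: prob_coin)
lemma space_Joint[simp]: "space Joint = UNIV" by (simp add: Joint_def space_pair_measure)
lemma prob_Joint: "prob_space Joint" unfolding Joint_def
  by (intro prob_space_pair prob_Cube)

lemma meas_comp[measurable]: "(\<lambda>\<omega>. \<omega> i) \<in> measurable Cube (count_space UNIV)"
proof -
  have "(\<lambda>\<omega>. \<omega> i) \<in> measurable Cube coin" unfolding Cube_def by (rule measurable_component_singleton) simp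
  moreover have "sets coin = sets (count_space UNIV)" by simp
  ultimately show ?thesis using measurable_cong_sets[of Cube Cube coin "count_space UNIV"] by simp
qed


lemma distr_snd_Joint: "distr Joint Cube snd = Cube"
proof (rule measure_eqI)
  interpret C: prob_space Cube by (rule prob_Cube)
  fix A assume A: "A \<in> sets (distr Joint Cube snd)"
  then have A': "A \<in> sets Cube" by simp
  have "snd -` A \<inter> space Joint = UNIV \<times> A" by auto
  moreover have "emeasure Joint (UNIV \<times> A) = emeasure Cube A"
    unfolding Joint_def using A' C.emeasure_space_1 sets.top[of Cube]
    by (subst C.emeasure_pair_measure_Times) (auto simp: C.prob_space_axioms prob_space_imp_sigma_finite)
  ultimately show "emeasure (distr Joint Cube snd) A = emeasure Cube A"
    using A' by (subst emeasure_distr) (auto simp: Joint_def)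
qed simp

definition fl :: "nat \<Rightarrow> (nat \<Rightarrow> bool) \<Rightarrow> (nat \<Rightarrow> bool)" where
  "fl j \<omega> = fun_upd \<omega> j (Not (\<omega> j))"

lemma fl_fl[simp]: "fl j (fl j \<omega>) = \<omega>" by (auto simp: fl_def)

lemma fl_meas[measurable]: "fl j \<in> measurable Cube Cube"
proof -
  have e: "fl j = (\<lambda>\<omega> i. (\<lambda>i \<omega>. if i = j then \<not> \<omega> i else \<omega> i) i \<omega>)" by (auto simp: fl_def fun_eq_iff)
  have m: "(\<lambda>\<omega>. if i = j then \<not> \<omega> i else \<omega> i) \<in> measurable Cube coin" for i
  proof -
    have "(\<lambda>\<omega>. if i = j then \<not> \<omega> i else \<omega> i) \<in> measurable Cube (count_space UNIV)"
      by measurable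
    moreover have "sets coin = sets (count_space UNIV)" by simp
    ultimately show ?thesis using measurable_cong_sets[of Cube Cube coin "count_space UNIV"] by simp
  qed
  show ?thesis unfolding e 
    apply (subst (2) Cube_def)
    apply (rule measurable_PiM_single')
     apply (rule m)
    apply simp
    done
qed

lemma distr_fl: "distr Cube Cube (fl j) = Cube"
proof -
  interpret product_prob_space "\<lambda>_. coin" UNIV
    by (simp add: product_prob_space_def product_sigma_finite_def prob_coin prob_space_imp_sigma_finite product_prob_space_axioms_def)
  show ?thesis unfolding Cube_def
  proof (rule PiM_eq)
    fix J F assume J: "finite J" "J \<subseteq> (UNIV::nat set)" and F: "\<And>i. i \<in> J \<Longrightarrow> F i \<in> sets coin"
    define F' where "F' i = (if i = j then Not -` F i else F i)" for i
    have pre: "fl j -` prod_emb UNIV (\<lambda>_. coin) J (PiE J F) \<inter> space (PiM UNIV (\<lambda>_. coin)) = prod_emb UNIV (\<lambda>_. coin) J (PiE J F')"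
      apply (auto simp: prod_emb_def space_PiM F'_def fl_def PiE_iff)
         apply (erule_tac x=j in ballE; simp)
        apply (erule_tac x=i in ballE; simp)
       apply (erule_tac x=j in ballE; simp)
      apply (erule_tac x=i in ballE; simp)
      done
    have c: "emeasure coin (F' i) = emeasure coin (F i)" for i
    proof -
      have "card (Not -` F i) = card (F i)"
        by (rule bij_betw_same_card[of Not]) (auto simp: bij_betw_def inj_on_def)
      then show ?thesis by (auto simp add: F'_def coin_def emeasure_pmf_of_set)
    qed
    have "emeasure (distr (PiM UNIV (\<lambda>_. coin)) (PiM UNIV (\<lambda>_. coin)) (fl j)) (prod_emb UNIV (\<lambda>_. coin) J (PiE J F))
        = emeasure (PiM UNIV (\<lambda>_. coin)) (prod_emb UNIV (\<lambda>_. coin) J (PiE J F'))"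
    proof (subst emeasure_distr)
      show "fl j \<in> PiM UNIV (\<lambda>_. coin) \<rightarrow>\<^sub>M PiM UNIV (\<lambda>_. coin)" using fl_meas by (simp add: Cube_def)
      show "prod_emb UNIV (\<lambda>_. coin) J (PiE J F) \<in> sets (PiM UNIV (\<lambda>_. coin))"
        using J F by (intro sets_PiM_I) auto
    qed (simp add: pre)
    also have "\<dots> = (\<Prod>i\<in>J. emeasure coin (F' i))" using J by (subst emeasure_PiM_emb) auto
    also have "\<dots> = (\<Prod>i\<in>J. emeasure coin (F i))" by (simp add: c)
    finally show "emeasure (distr (PiM UNIV (\<lambda>_. coin)) (PiM UNIV (\<lambda>_. coin)) (fl j)) (prod_emb UNIV (\<lambda>_. coin) J (PiE J F)) = (\<Prod>i\<in>J. emeasure coin (F i))" .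
  qed simp
qed

definition Fl :: "nat \<Rightarrow> (nat \<Rightarrow> bool) \<times> (nat \<Rightarrow> bool) \<Rightarrow> (nat \<Rightarrow> bool) \<times> (nat \<Rightarrow> bool)" where
  "Fl j p = (fst p, fl j (snd p))"

lemma Fl_Fl[simp]: "Fl j (Fl j p) = p" by (simp add: Fl_def)

lemma Fl_meas[measurable]: "Fl j \<in> measurable Joint Joint"
  unfolding Fl_def Joint_def
  by (intro measurable_Pair measurable_compose[OF measurable_snd fl_meas] measurable_fst)

lemma distr_Fl: "distr Joint Joint (Fl j) = Joint"
proof -
  interpret C: prob_space Cube by (rule prob_Cube)
  have "distr Cube Cube id \<Otimes>\<^sub>M distr Cube Cube (fl j) = distr (Cube \<Otimes>\<^sub>M Cube) (Cube \<Otimes>\<^sub>M Cube) (\<lambda>(x, y). (id x, fl j y))"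
    by (rule pair_measure_distr) (auto simp: distr_fl C.prob_space_axioms prob_space_imp_sigma_finite)
  moreover have "(\<lambda>(x, y). (id x, fl j y)) = Fl j" by (auto simp: Fl_def)
  moreover have "distr Cube Cube id = Cube" using distr_id[of Cube] by (simp add: id_def)
  ultimately show ?thesis by (simp add: distr_fl Joint_def)
qed

lemma integral_Fl:
  fixes g :: "_ \<Rightarrow> real"
  assumes [measurable]: "g \<in> borel_measurable Joint"
  shows "(\<integral>p. g (Fl j p) \<partial>Joint) = (\<integral>p. g p \<partial>Joint)"
proof -
  have "(\<integral>p. g p \<partial>Joint) = (\<integral>p. g p \<partial>distr Joint Joint (Fl j))" by (simp add: distr_Fl)
  also have "\<dots> = (\<integral>p. g (Fl j p) \<partial>Joint)" by (rule integral_distr) auto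
  finally show ?thesis by simp
qed

lemma AE_Fl:
  assumes "AE p in Joint. P p"
  shows "AE p in Joint. P (Fl j p)"
proof -
  have "AE p in distr Joint Joint (Fl j). P p" by (subst distr_Fl) (rule assms(1))
  then show ?thesis by (rule AE_distrD[rotated]) simp
qed


lemma flip_zero:
  fixes Z :: "_ \<Rightarrow> real"
  assumes Zm[measurable]: "Z \<in> borel_measurable Joint" and A[measurable]: "A \<in> sets Joint"
    and inv: "\<And>p. p \<in> A \<Longrightarrow> Fl j p \<in> A"
    and anti: "AE p in Joint. p \<in> A \<longrightarrow> Z (Fl j p) = - Z p"
  shows "(\<integral>p. indicator A p * Z p \<partial>Joint) = 0"
proof -
  have ind: "indicator A (Fl j p) = (indicator A p :: real)" for p
    using inv[of p] inv[of "Fl j p"] by (auto simp: indicator_def)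
  have "(\<integral>p. indicator A p * Z p \<partial>Joint) = (\<integral>p. indicator A (Fl j p) * Z (Fl j p) \<partial>Joint)"
    by (rule integral_Fl[symmetric]) (intro borel_measurable_times borel_measurable_indicator A Zm)
  also have "\<dots> = (\<integral>p. - (indicator A p * Z p) \<partial>Joint)"
    unfolding ind
    apply (rule integral_cong_AE)
      apply (intro borel_measurable_times borel_measurable_indicator A measurable_compose[OF Fl_meas Zm] borel_measurable_uminus Zm)
     apply (intro borel_measurable_times borel_measurable_indicator A measurable_compose[OF Fl_meas Zm] borel_measurable_uminus Zm)
    apply (rule AE_mp[OF anti])
    apply (rule AE_I2)
    apply (auto simp: indicator_def)
    done
  also have "\<dots> = - (\<integral>p. indicator A p * Z p \<partial>Joint)" by simp
  finally show ?thesis by simp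
qed

lemma length_hist[simp]: "length (hist nx r \<omega> n) = n"
  by (induction n) (auto simp: Let_def)

lemma hist_Suc': "hist nx r \<omega> (Suc n) = hist nx r \<omega> n @ [(nx r (hist nx r \<omega> n), \<omega> (nx r (hist nx r \<omega> n)))]"
  by (simp add: Let_def)

declare hist.simps(2)[simp del]

lemma hist_take: "m \<le> n \<Longrightarrow> hist nx r \<omega> m = take m (hist nx r \<omega> n)"
proof (induction n)
  case 0 then show ?case by simp
next
  case (Suc n)
  show ?case
  proof (cases "m = Suc n")
    case True then show ?thesis by (metis length_hist order_refl take_all)
  next
    case False then have "m \<le> n" using Suc by simp
    then show ?thesis using Suc by (simp add: hist_Suc')
  qed
qed

lemma queried_Suc: "queried nx r \<omega> (Suc n) = insert (nx r (hist nx r \<omega> n)) (queried nx r \<omega> n)"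
  by (auto simp: queried_def hist_Suc')

lemma queried_0[simp]: "queried nx r \<omega> 0 = {}" by (simp add: queried_def)

lemma queried_mono: "m \<le> n \<Longrightarrow> queried nx r \<omega> m \<subseteq> queried nx r \<omega> n"
  by (induction n) (auto simp: queried_Suc le_Suc_eq)

lemma finite_queried[simp]: "finite (queried nx r \<omega> n)"
  by (simp add: queried_def)

lemma hist_vals: "(i, b) \<in> set (hist nx r \<omega> n) \<Longrightarrow> b = \<omega> i"
  by (induction n) (auto simp: hist_Suc')

lemma hist_fl: "j \<notin> queried nx r \<omega> n \<Longrightarrow> m \<le> n \<Longrightarrow> hist nx r (fl j \<omega>) m = hist nx r \<omega> m"
proof (induction m)
  case 0 then show ?case by simp
next
  case (Suc m)
  then have IH: "hist nx r (fl j \<omega>) m = hist nx r \<omega> m" by simp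
  have "nx r (hist nx r \<omega> m) \<in> queried nx r \<omega> n"
    using queried_mono[OF Suc.prems(2), of nx r \<omega>] by (auto simp: queried_Suc)
  then have "nx r (hist nx r \<omega> m) \<noteq> j" using Suc.prems by auto
  then show ?case unfolding hist_Suc' IH by (simp add: fl_def)
qed

lemma queried_fl: "j \<notin> queried nx r \<omega> n \<Longrightarrow> m \<le> n \<Longrightarrow> queried nx r (fl j \<omega>) m = queried nx r \<omega> m"
  by (simp add: queried_def hist_fl)

lemma queried_fl_Suc: "j \<notin> queried nx r \<omega> n \<Longrightarrow> queried nx r (fl j \<omega>) (Suc n) = queried nx r \<omega> (Suc n)"
  by (simp add: queried_Suc hist_fl queried_fl)

lemma hist_meas:
  assumes nxm: "\<And>h. (\<lambda>r. nx r h) \<in> measurable Cube (count_space UNIV)"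
  shows "(\<lambda>p. hist nx (fst p) (snd p) n) \<in> measurable Joint (count_space UNIV)"
proof (induction n)
  case 0 then show ?case by simp
next
  case (Suc n)
  have nxm': "(\<lambda>p. nx (fst p) h) \<in> measurable Joint (count_space UNIV)" for h
    unfolding Joint_def by (rule measurable_compose[OF measurable_fst nxm])
  have sm: "(\<lambda>p. snd p i) \<in> measurable Joint (count_space UNIV)" for i
    unfolding Joint_def by (rule measurable_compose[OF measurable_snd meas_comp])
  have step: "(\<lambda>p. h @ [(nx (fst p) h, snd p (nx (fst p) h))]) \<in> measurable Joint (count_space UNIV)" for h
  proof -
    have "(\<lambda>p. (\<lambda>i p. h @ [(i, snd p i)]) (nx (fst p) h) p) \<in> measurable Joint (count_space UNIV)"
    proof (rule measurable_compose_countable'[OF _ nxm'])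
      fix i :: nat
      show "(\<lambda>p. h @ [(i, snd p i)]) \<in> measurable Joint (count_space UNIV)"
        using measurable_compose[OF sm[of i], of "\<lambda>b. h @ [(i, b)]" "count_space UNIV"] by simp
    qed simp
    then show ?thesis by simp
  qed
  have "(\<lambda>p. (\<lambda>h p. h @ [(nx (fst p) h, snd p (nx (fst p) h))]) (hist nx (fst p) (snd p) n) p) \<in> measurable Joint (count_space UNIV)"
    by (rule measurable_compose_countable'[OF step Suc]) simp
  then show ?case by (simp add: hist_Suc')
qed


lemma witness_mono: assumes "witness f W \<omega>" "W \<subseteq> W'" shows "witness f W' \<omega>"
proof -
  obtain A where A: "A \<in> sets Cube" "measure Cube A = 1" "\<forall>\<omega>'\<in>A. (\<forall>i\<in>W. \<omega>' i = \<omega> i) \<longrightarrow> f \<omega>' = f \<omega>"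
    using assms(1) unfolding witness_def by blast
  show ?thesis unfolding witness_def
    by (rule bexI[of _ A]) (use A assms(2) in auto)
qed

lemma witness_char:
  assumes bf: "boolean_function f" and W: "finite W"
  shows "witness f W \<omega> \<longleftrightarrow> measure Cube {\<omega>'. (\<forall>i\<in>W. \<omega>' i = \<omega> i) \<and> f \<omega>' \<noteq> f \<omega>} = 0"
proof -
  interpret C: prob_space Cube by (rule prob_Cube)
  have fm[measurable]: "f \<in> borel_measurable Cube" using bf by (simp add: boolean_function_def)
  define X where "X = {\<omega>'. (\<forall>i\<in>W. \<omega>' i = \<omega> i) \<and> f \<omega>' \<noteq> f \<omega>}"
  have Xm: "X \<in> sets Cube"
  proof -
    have "X = {\<omega>'\<in>space Cube. (\<forall>i\<in>W. \<omega>' i = \<omega> i) \<and> f \<omega>' \<noteq> f \<omega>}" by (simp add: X_def)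
    also have "\<dots> \<in> sets Cube" using W by measurable
    finally show ?thesis .
  qed
  show ?thesis unfolding X_def[symmetric]
  proof
    assume "witness f W \<omega>"
    then obtain A where A: "A \<in> sets Cube" "measure Cube A = 1"
      and h: "\<forall>\<omega>'\<in>A. (\<forall>i\<in>W. \<omega>' i = \<omega> i) \<longrightarrow> f \<omega>' = f \<omega>" unfolding witness_def by blast
    have "X \<subseteq> space Cube - A" using h by (auto simp: X_def)
    then have "measure Cube X \<le> measure Cube (space Cube - A)" using A Xm sets.compl_sets[of A Cube] by (intro C.finite_measure_mono) auto
    also have "\<dots> = 0" using A C.prob_compl[of A] by simp
    finally show "measure Cube X = 0" using measure_nonneg[of Cube X] by linarith
  next
    assume X0: "measure Cube X = 0"
    show "witness f W \<omega>" unfolding witness_def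
    proof (intro bexI conjI)
      show "measure Cube (space Cube - X) = 1" using C.prob_compl[OF Xm] X0 by simp
      show "\<forall>\<omega>'\<in>space Cube - X. (\<forall>i\<in>W. \<omega>' i = \<omega> i) \<longrightarrow> f \<omega>' = f \<omega>" by (auto simp: X_def)
    qed (use Xm sets.compl_sets[of X Cube] in auto)
  qed
qed

locale alg =
  fixes f :: "(nat \<Rightarrow> bool) \<Rightarrow> real" and nx :: algorithm
  assumes bf: "boolean_function f"
    and nxm: "\<And>h. (\<lambda>r. nx r h) \<in> measurable Cube (count_space UNIV)"
begin

definition H :: "nat \<Rightarrow> (nat \<Rightarrow> bool) \<times> (nat \<Rightarrow> bool) \<Rightarrow> (nat \<times> bool) list" where
  "H n p = hist nx (fst p) (snd p) n"

definition Q :: "nat \<Rightarrow> (nat \<Rightarrow> bool) \<times> (nat \<Rightarrow> bool) \<Rightarrow> nat set" where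
  "Q n p = queried nx (fst p) (snd p) n"

lemma Q_H: "Q n p = fst ` set (H n p)" by (simp add: Q_def H_def queried_def)

definition cyl :: "(nat \<times> bool) list \<Rightarrow> (nat \<Rightarrow> bool) \<Rightarrow> bool" where
  "cyl h \<omega> \<longleftrightarrow> (\<forall>(i, b)\<in>set h. \<omega> i = b)"

definition stop :: "(nat \<times> bool) list \<Rightarrow> bool" where
  "stop h \<longleftrightarrow> (\<exists>v. measure Cube {\<omega>. cyl h \<omega> \<and> f \<omega> \<noteq> v} = 0)"

definition vv :: "(nat \<times> bool) list \<Rightarrow> real" where
  "vv h = (SOME v. measure Cube {\<omega>. cyl h \<omega> \<and> f \<omega> \<noteq> v} = 0)"

definition alive :: "nat \<Rightarrow> (nat \<Rightarrow> bool) \<times> (nat \<Rightarrow> bool) \<Rightarrow> bool" where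
  "alive n p \<longleftrightarrow> (\<forall>m<n. \<not> stop (H m p))"

definition J' :: "(nat \<Rightarrow> bool) \<times> (nat \<Rightarrow> bool) \<Rightarrow> nat set" where
  "J' p = {i. \<exists>n. alive n p \<and> i \<in> Q n p}"

definition good :: "(nat \<Rightarrow> bool) \<times> (nat \<Rightarrow> bool) \<Rightarrow> bool" where
  "good p \<longleftrightarrow> (\<exists>n. stop (H n p)) \<and> (\<forall>n. stop (H n p) \<longrightarrow> f (snd p) = vv (H n p))"

lemma fm[measurable]: "f \<in> borel_measurable Cube" using bf by (simp add: boolean_function_def)

lemma H_meas: "(\<lambda>p. H n p) \<in> measurable Joint (count_space UNIV)"
  unfolding H_def by (rule hist_meas[OF nxm])

lemma sets_H: "{p. R (H n p)} \<in> sets Joint"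
proof -
  have "(\<lambda>p. R (H n p)) \<in> measurable Joint (count_space UNIV)"
    by (rule measurable_compose[OF H_meas]) simp
  then have "{p \<in> space Joint. R (H n p)} \<in> sets Joint" by measurable
  then show ?thesis by simp
qed

lemma borel_H: "(\<lambda>p. g (H n p) :: real) \<in> borel_measurable Joint"
  by (rule measurable_compose[OF H_meas]) simp

lemma cyl_H: "cyl (H n p) \<omega>' \<longleftrightarrow> (\<forall>i\<in>Q n p. \<omega>' i = snd p i)"
  unfolding cyl_def Q_H H_def using hist_vals[of _ _ nx "fst p" "snd p" n] by fastforce

lemma witness_Q: "witness f (Q n p) (snd p) \<longleftrightarrow> measure Cube {\<omega>'. cyl (H n p) \<omega>' \<and> f \<omega>' \<noteq> f (snd p)} = 0"
  unfolding cyl_H by (rule witness_char[OF bf]) (simp add: Q_def)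

lemma witness_stop: "witness f (Q n p) (snd p) \<Longrightarrow> stop (H n p)"
  unfolding witness_Q stop_def by blast

lemma vv_prop: "stop h \<Longrightarrow> measure Cube {\<omega>. cyl h \<omega> \<and> f \<omega> \<noteq> vv h} = 0"
  unfolding stop_def vv_def by (rule someI_ex)

lemma good_witness: "good p \<Longrightarrow> witness f (Q n p) (snd p) \<longleftrightarrow> stop (H n p)"
  using witness_stop[of n p] vv_prop[of "H n p"] unfolding witness_Q good_def by auto

lemma alive_H: "alive n p \<longleftrightarrow> (\<forall>m<n. \<not> stop (take m (H n p)))"
proof -
  have e: "m < n \<Longrightarrow> H m p = take m (H n p)" for m unfolding H_def by (rule hist_take) simp
  show ?thesis unfolding alive_def
  proof (intro iffI allI impI)
    fix m assume "\<forall>m<n. \<not> stop (H m p)" "m < n"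
    then show "\<not> stop (take m (H n p))" using e[of m] by metis
  next
    fix m assume "\<forall>m<n. \<not> stop (take m (H n p))" "m < n"
    then show "\<not> stop (H m p)" using e[of m] by metis
  qed
qed

lemma sets_alive: "{p. alive n p} \<in> sets Joint"
  unfolding alive_H by (rule sets_H)

lemma sets_J': "{p. i \<in> J' p} \<in> sets Joint"
proof -
  have "{p. i \<in> J' p} = (\<Union>n. {p. alive n p} \<inter> {p. i \<in> fst ` set (H n p)})"
    by (auto simp: J'_def Q_H)
  also have "\<dots> \<in> sets Joint" using sets_alive sets_H by auto
  finally show ?thesis .
qed


lemma H_Fl: "H n (Fl j p) = hist nx (fst p) (fl j (snd p)) n"
  by (simp add: H_def Fl_def)

lemma Q_Fl: "Q n (Fl j p) = queried nx (fst p) (fl j (snd p)) n"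
  by (simp add: Q_def Fl_def)

lemma alive_antimono: "alive n p \<Longrightarrow> m \<le> n \<Longrightarrow> alive m p"
  by (auto simp: alive_def)

lemma alive_Suc: "alive (Suc n) p \<longleftrightarrow> alive n p \<and> \<not> stop (H n p)"
  by (auto simp: alive_def less_Suc_eq)

lemma H_Fl_eq: "j \<notin> Q n p \<Longrightarrow> m \<le> n \<Longrightarrow> H m (Fl j p) = H m p"
  unfolding H_Fl by (simp add: H_def hist_fl Q_def)

lemma notin_J'_Q: "j \<notin> J' p \<Longrightarrow> alive n p \<Longrightarrow> j \<notin> Q n p"
  by (auto simp: J'_def)

lemma alive_Fl: "j \<notin> J' p \<Longrightarrow> alive n (Fl j p) \<longleftrightarrow> alive n p"
proof (induction n)
  case 0 then show ?case by (simp add: alive_def)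
next
  case (Suc n)
  show ?case
  proof (cases "alive n p")
    case True
    then have "H n (Fl j p) = H n p" using notin_J'_Q[OF Suc.prems True] by (intro H_Fl_eq) auto
    then show ?thesis using Suc True by (simp add: alive_Suc)
  next
    case False then show ?thesis using Suc by (simp add: alive_Suc)
  qed
qed

lemma J'_Fl: assumes "j \<notin> J' p" shows "J' (Fl j p) = J' p"
proof -
  have "alive n p \<Longrightarrow> Q n (Fl j p) = Q n p" for n
    using H_Fl_eq[OF notin_J'_Q[OF assms], of n n] by (simp add: Q_H)
  then show ?thesis unfolding J'_def using alive_Fl[OF assms] by auto
qed

lemma f_Fl:
  assumes g1: "good p" and g2: "good (Fl j p)" and j: "j \<notin> J' p"
  shows "f (snd (Fl j p)) = f (snd p)"
proof -
  define n0 where "n0 = (LEAST n. stop (H n p))"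
  have st: "stop (H n0 p)" using g1 unfolding good_def n0_def by (metis LeastI)
  have al: "alive n0 p" unfolding alive_def n0_def using not_less_Least by blast
  have e: "H n0 (Fl j p) = H n0 p" using H_Fl_eq[OF notin_J'_Q[OF j al]] by simp
  have "f (snd p) = vv (H n0 p)" using g1 st unfolding good_def by blast
  moreover have "f (snd (Fl j p)) = vv (H n0 (Fl j p))" using g2 st e unfolding good_def by metis
  ultimately show ?thesis using e by simp
qed

lemma good_revealed:
  assumes g: "good p"
  shows "revealed f nx (fst p) (snd p) = J' p"
proof -
  define n0 where "n0 = (LEAST n. stop (H n p))"
  have st: "stop (H n0 p)" using g unfolding good_def n0_def by (metis LeastI)
  have al: "alive n p \<longleftrightarrow> n \<le> n0" for n
  proof
    assume "alive n p" then show "n \<le> n0" using st unfolding alive_def by (metis not_le)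
  next
    assume "n \<le> n0" then show "alive n p" unfolding alive_def n0_def using not_less_Least
      by (metis order.strict_trans2)
  qed
  have st_eq: "stop_time f nx (fst p) (snd p) = n0"
    unfolding stop_time_def n0_def using good_witness[OF g] by (simp add: Q_def H_def)
  have "J' p = Q n0 p"
    unfolding J'_def al using queried_mono[of _ n0 nx "fst p" "snd p"] by (auto simp: Q_def)
  then show ?thesis by (simp add: revealed_def st_eq Q_def)
qed

lemma AE_good:
  assumes va: "AE p in Joint. \<exists>n. witness f (queried nx (fst p) (snd p) n) (snd p)"
  shows "AE p in Joint. good p"
proof -
  interpret C: prob_space Cube by (rule prob_Cube)
  have "AE p in Joint. stop h \<and> cyl h (snd p) \<longrightarrow> f (snd p) = vv h" for h
  proof -
    have "AE \<omega> in Cube. stop h \<and> cyl h \<omega> \<longrightarrow> f \<omega> = vv h"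
    proof (cases "stop h")
      case True
      define N where "N = {\<omega>. cyl h \<omega> \<and> f \<omega> \<noteq> vv h}"
      have Nm: "N \<in> sets Cube"
      proof -
        have "N = {\<omega> \<in> space Cube. (\<forall>x\<in>set h. \<omega> (fst x) = snd x) \<and> f \<omega> \<noteq> vv h}"
          by (auto simp: N_def cyl_def)
        also have "\<dots> \<in> sets Cube" by measurable
        finally show ?thesis .
      qed
      have "N \<in> null_sets Cube" using Nm vv_prop[OF True] by (simp add: null_sets_def N_def C.emeasure_eq_measure)
      then show ?thesis by (rule AE_I') (auto simp: N_def)
    qed simp
    then have "AE p in distr Joint Cube snd. stop h \<and> cyl h p \<longrightarrow> f p = vv h" by (subst distr_snd_Joint)
    then show ?thesis by (rule AE_distrD[rotated]) (simp add: Joint_def)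
  qed
  then have "AE p in Joint. \<forall>h. stop h \<and> cyl h (snd p) \<longrightarrow> f (snd p) = vv h"
    by (subst AE_all_countable) simp
  then show ?thesis using va
  proof eventually_elim
    case (elim p)
    then show ?case unfolding good_def
      using witness_stop[of _ p] cyl_H[of _ p "snd p"] by (auto simp: Q_def)
  qed
qed

end

lemma chi_fl: "finite S \<Longrightarrow> chi S (fl j \<omega>) = (if j \<in> S then - chi S \<omega> else chi S \<omega>)"
proof -
  assume S: "finite S"
  show ?thesis
  proof (cases "j \<in> S")
    case True
    have "chi S (fl j \<omega>) = sgnb (fl j \<omega> j) * (\<Prod>i\<in>S - {j}. sgnb (fl j \<omega> i))"
      unfolding chi_def using S True by (simp add: prod.remove)
    also have "(\<Prod>i\<in>S - {j}. sgnb (fl j \<omega> i)) = (\<Prod>i\<in>S - {j}. sgnb (\<omega> i))"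
      by (rule prod.cong) (auto simp: fl_def)
    also have "sgnb (fl j \<omega> j) = - sgnb (\<omega> j)" by (simp add: fl_def sgnb_def)
    finally show ?thesis unfolding chi_def using S True by (simp add: prod.remove)
  next
    case False
    then show ?thesis unfolding chi_def by (auto intro!: prod.cong simp: fl_def)
  qed
qed

lemma abs_chi: "\<bar>chi S \<omega>\<bar> = 1"
  unfolding chi_def abs_prod by (rule prod.neutral) (simp add: sgnb_def)

lemma chi_sq: "chi S \<omega> * chi S \<omega> = 1"
  using abs_chi[of S \<omega>] by (metis abs_mult_self_eq mult_1_left)

lemma chi_meas[measurable]: "chi S \<in> borel_measurable Cube"
proof -
  have "(\<lambda>\<omega>. sgnb (\<omega> i)) \<in> borel_measurable Cube" for i
    by (rule measurable_compose[OF meas_comp]) simp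
  then show ?thesis unfolding chi_def[abs_def] by (intro borel_measurable_prod) auto
qed

lemma snd_meas: "g \<in> borel_measurable Cube \<Longrightarrow> (\<lambda>p. g (snd p) :: real) \<in> borel_measurable Joint"
  unfolding Joint_def by (rule measurable_compose[OF measurable_snd])

lemma integral_snd_Joint: assumes gm: "g \<in> borel_measurable Cube"
  shows "(\<integral>p. g (snd p) \<partial>Joint) = (\<integral>\<omega>. (g \<omega> :: real) \<partial>Cube)"
proof -
  have "(\<integral>\<omega>. g \<omega> \<partial>Cube) = (\<integral>\<omega>. g \<omega> \<partial>distr Joint Cube snd)" by (subst distr_snd_Joint) simp
  also have "\<dots> = (\<integral>p. g (snd p) \<partial>Joint)" 
    by (rule integral_distr) (auto simp: Joint_def gm)
  finally show ?thesis by simp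
qed


context alg begin

lemma sets_hit: "finite S \<Longrightarrow> {p. S \<inter> J' p \<noteq> {}} \<in> sets Joint"
proof -
  assume S: "finite S"
  have "{p. S \<inter> J' p \<noteq> {}} = (\<Union>i\<in>S. {p. i \<in> J' p})" by auto
  also have "\<dots> \<in> sets Joint" using S sets_J' by auto
  finally show ?thesis .
qed

lemma sets_nohit: "finite S \<Longrightarrow> {p. S \<inter> J' p = {}} \<in> sets Joint"
proof -
  assume S: "finite S"
  have "{p. S \<inter> J' p = {}} = space Joint - {p. S \<inter> J' p \<noteq> {}}" by auto
  then show ?thesis using sets.compl_sets[OF sets_hit[OF S]] by simp
qed

lemma fsnd_meas: "(\<lambda>p. f (snd p)) \<in> borel_measurable Joint" by (rule snd_meas[OF fm])
lemma chisnd_meas: "(\<lambda>p. chi S (snd p)) \<in> borel_measurable Joint" by (rule snd_meas[OF chi_meas])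

lemma L1:
  assumes va: "AE p in Joint. \<exists>n. witness f (queried nx (fst p) (snd p) n) (snd p)"
    and S: "finite S" "S \<noteq> {}"
  shows "(\<integral>p. indicator {p. S \<inter> J' p = {}} p * (f (snd p) * chi S (snd p)) \<partial>Joint) = 0"
proof -
  obtain j where j: "j \<in> S" using S by auto
  show ?thesis
  proof (rule flip_zero[where j = j])
    show "(\<lambda>p. f (snd p) * chi S (snd p)) \<in> borel_measurable Joint"
      using fsnd_meas chisnd_meas by (rule borel_measurable_times)
    show "{p. S \<inter> J' p = {}} \<in> sets Joint" by (rule sets_nohit[OF S(1)])
    fix p assume "p \<in> {p. S \<inter> J' p = {}}"
    then show "Fl j p \<in> {p. S \<inter> J' p = {}}" using j J'_Fl[of j p] by auto
  next
    have g: "AE p in Joint. good p" by (rule AE_good[OF va])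
    have g2: "AE p in Joint. good (Fl j p)" by (rule AE_Fl[OF g])
    show "AE p in Joint. p \<in> {p. S \<inter> J' p = {}} \<longrightarrow> f (snd (Fl j p)) * chi S (snd (Fl j p)) = - (f (snd p) * chi S (snd p))"
      using g g2
    proof eventually_elim
      case (elim p)
      show ?case
      proof
        assume "p \<in> {p. S \<inter> J' p = {}}"
        then have jn: "j \<notin> J' p" using j by auto
        have "f (snd (Fl j p)) = f (snd p)" by (rule f_Fl[OF elim jn])
        moreover have "chi S (snd (Fl j p)) = - chi S (snd p)" using chi_fl[OF S(1), of j] j by (simp add: Fl_def)
        ultimately show "f (snd (Fl j p)) * chi S (snd (Fl j p)) = - (f (snd p) * chi S (snd p))" by simp
      qed
    qed
  qed
qed

end


lemma bint: "g \<in> borel_measurable Joint \<Longrightarrow> (\<And>p. \<bar>g p\<bar> \<le> B) \<Longrightarrow> integrable Joint (g :: _ \<Rightarrow> real)"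
proof -
  assume m: "g \<in> borel_measurable Joint" and b: "\<And>p. \<bar>g p\<bar> \<le> B"
  interpret P: prob_space Joint by (rule prob_Joint)
  show ?thesis by (rule P.integrable_const_bound[of _ B]) (use m b in auto)
qed

lemma chi_pair_fl:
  assumes "finite S" "finite S'" "j \<in> (S - S') \<union> (S' - S)"
  shows "chi S (fl j \<omega>) * chi S' (fl j \<omega>) = - (chi S \<omega> * chi S' \<omega>)"
  using assms by (auto simp: chi_fl)

context alg begin

definition E0 :: "nat set \<Rightarrow> nat \<Rightarrow> ((nat \<Rightarrow> bool) \<times> (nat \<Rightarrow> bool)) set" where
  "E0 D j = {p. j \<notin> J' p \<and> (\<forall>i\<in>D. i < j \<longrightarrow> i \<in> J' p)}"

definition E1 :: "nat set \<Rightarrow> nat \<Rightarrow> ((nat \<Rightarrow> bool) \<times> (nat \<Rightarrow> bool)) set" where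
  "E1 D l = {p. \<exists>n. D - {l} \<subseteq> Q n p \<and> l \<notin> Q n p \<and> nx (fst p) (H n p) = l \<and> alive (Suc n) p}"

lemma sets_E0: assumes D: "finite D" shows "E0 D j \<in> sets Joint"
proof -
  have "E0 D j = {p. j \<notin> J' p} - (\<Union>i\<in>{i\<in>D. i < j}. {p. i \<notin> J' p})" by (auto simp: E0_def)
  moreover have "{p. i \<notin> J' p} \<in> sets Joint" for i
    using sets.compl_sets[OF sets_J'[of i]] by (simp add: set_diff_eq)
  ultimately show ?thesis using D by auto
qed

lemma H_Suc: "H (Suc n) p = H n p @ [(nx (fst p) (H n p), snd p (nx (fst p) (H n p)))]"
  by (simp add: H_def hist_Suc')

lemma length_H[simp]: "length (H n p) = n" by (simp add: H_def)

lemma sets_E1: "E1 D l \<in> sets Joint"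
proof -
  define R where "R n h \<longleftrightarrow> D - {l} \<subseteq> fst ` set (take n h) \<and> l \<notin> fst ` set (take n h) \<and> fst (last h) = l
     \<and> (\<forall>m<Suc n. \<not> stop (take m h))" for n h
  have "E1 D l = (\<Union>n. {p. R n (H (Suc n) p)})"
  proof -
    have "R n (H (Suc n) p) \<longleftrightarrow> D - {l} \<subseteq> Q n p \<and> l \<notin> Q n p \<and> nx (fst p) (H n p) = l \<and> alive (Suc n) p" for n p
      unfolding R_def alive_H[of "Suc n"] Q_H by (simp add: H_Suc)
    then show ?thesis by (auto simp: E1_def)
  qed
  also have "\<dots> \<in> sets Joint" using sets_H by auto
  finally show ?thesis .
qed

lemma E1_sub: assumes "p \<in> E1 D l" shows "D \<subseteq> J' p"
proof -
  obtain n where n: "D - {l} \<subseteq> Q n p" "nx (fst p) (H n p) = l" "alive (Suc n) p"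
    using assms by (auto simp: E1_def)
  have "Q (Suc n) p = insert l (Q n p)" using n(2) by (simp add: Q_def queried_Suc H_def)
  then have "D \<subseteq> Q (Suc n) p" using n(1) by auto
  then show ?thesis using n(3) by (auto simp: J'_def)
qed

lemma E1_Fl: assumes "p \<in> E1 D l" shows "Fl l p \<in> E1 D l"
proof -
  obtain n where n: "D - {l} \<subseteq> Q n p" "l \<notin> Q n p" "nx (fst p) (H n p) = l" "alive (Suc n) p"
    using assms by (auto simp: E1_def)
  have e: "m \<le> n \<Longrightarrow> H m (Fl l p) = H m p" for m by (rule H_Fl_eq[OF n(2)])
  have "Q n (Fl l p) = Q n p" using e[of n] by (simp add: Q_H)
  moreover have "fst (Fl l p) = fst p" by (simp add: Fl_def)
  moreover have "alive (Suc n) (Fl l p)" using n(4) e unfolding alive_def by (simp add: less_Suc_eq_le)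
  ultimately show ?thesis unfolding E1_def using n e[of n] by (intro CollectI exI[of _ n]) auto
qed

lemma exists_alive_cover:
  assumes D: "finite D" and sub: "D \<subseteq> J' p"
  shows "\<exists>N. alive N p \<and> D \<subseteq> Q N p"
  using D sub
proof (induction D rule: finite_induct)
  case empty then show ?case by (auto simp: alive_def)
next
  case (insert i D)
  then obtain N where N: "alive N p" "D \<subseteq> Q N p" by auto
  obtain n where n: "alive n p" "i \<in> Q n p" using insert.prems by (auto simp: J'_def)
  show ?case
  proof (cases "N \<le> n")
    case True
    then show ?thesis using N n queried_mono[OF True, of nx "fst p" "snd p"] by (intro exI[of _ n]) (auto simp: Q_def)
  next
    case False
    then have "n \<le> N" by simp
    then show ?thesis using N n queried_mono[OF \<open>n \<le> N\<close>, of nx "fst p" "snd p"] by (intro exI[of _ N]) (auto simp: Q_def)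
  qed
qed

lemma E1_exists:
  assumes D: "finite D" "D \<noteq> {}" and sub: "D \<subseteq> J' p"
  shows "\<exists>l\<in>D. p \<in> E1 D l"
proof -
  obtain N where N: "alive N p" "D \<subseteq> Q N p" using exists_alive_cover[OF D(1) sub] by blast
  define n1 where "n1 = (LEAST n. D \<subseteq> Q n p)"
  have n1: "D \<subseteq> Q n1 p" unfolding n1_def using N(2) by (rule LeastI)
  have n1N: "n1 \<le> N" unfolding n1_def using N(2) by (rule Least_le)
  have al: "alive n1 p" by (rule alive_antimono[OF N(1) n1N])
  have "n1 \<noteq> 0" using n1 D(2) by (auto simp: Q_def)
  then obtain n where n: "n1 = Suc n" by (cases n1) auto
  have nsub: "\<not> D \<subseteq> Q n p" using not_less_Least[of n "\<lambda>n. D \<subseteq> Q n p"] n unfolding n1_def by auto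
  define l where "l = nx (fst p) (H n p)"
  have QS: "Q (Suc n) p = insert l (Q n p)" by (simp add: l_def Q_def queried_Suc H_def)
  have "l \<notin> Q n p" using nsub n1 n QS by auto
  moreover have "l \<in> D" using nsub n1 n QS by auto
  moreover have "D - {l} \<subseteq> Q n p" using n1 n QS by auto
  ultimately show ?thesis using al n l_def by (auto simp: E1_def)
qed

lemma E1_unique:
  assumes "p \<in> E1 D l" "p \<in> E1 D l'" "l \<in> D" "l' \<in> D"
  shows "l = l'"
proof (rule ccontr)
  assume ne: "l \<noteq> l'"
  obtain n where n: "D - {l} \<subseteq> Q n p" "l \<notin> Q n p" "nx (fst p) (H n p) = l"
    using assms(1) by (auto simp: E1_def)
  obtain n' where n': "D - {l'} \<subseteq> Q n' p" "l' \<notin> Q n' p" "nx (fst p) (H n' p) = l'"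
    using assms(2) by (auto simp: E1_def)
  have "l' \<in> Q n p" using n(1) ne assms(4) by auto
  moreover have "l \<in> Q n' p" using n'(1) ne assms(3) by auto
  ultimately show False
  proof (cases "n \<le> n'")
    case True
    then have "Q n p \<subseteq> Q n' p" unfolding Q_def by (rule queried_mono)
    then show False using \<open>l' \<in> Q n p\<close> n'(2) by blast
  next
    case False
    then have "Q n' p \<subseteq> Q n p" unfolding Q_def by (intro queried_mono) simp
    then show False using \<open>l \<in> Q n' p\<close> n(2) by blast
  qed
qed

lemma partition_sum:
  assumes D: "finite D" "D \<noteq> {}"
  shows "(\<Sum>j\<in>D. indicator (E0 D j) p) + (\<Sum>l\<in>D. indicator (E1 D l) p) = (1::real)"
proof (cases "D \<subseteq> J' p")
  case True
  have z: "(\<Sum>j\<in>D. indicator (E0 D j) p :: real) = 0"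
  proof (intro sum.neutral ballI)
    fix j assume "j \<in> D"
    then have "p \<notin> E0 D j" using True unfolding E0_def by blast
    then show "indicator (E0 D j) p = (0::real)" by simp
  qed
  obtain l where l: "l \<in> D" "p \<in> E1 D l" using E1_exists[OF D True] by blast
  have "(\<Sum>l'\<in>D. indicator (E1 D l') p :: real) = (\<Sum>l'\<in>D. if l' = l then 1 else 0)"
  proof (intro sum.cong refl)
    fix l' assume l': "l' \<in> D"
    show "indicator (E1 D l') p = (if l' = l then 1 else (0::real))"
    proof (cases "l' = l")
      case True then show ?thesis using l by simp
    next
      case False
      then have "p \<notin> E1 D l'" using E1_unique[OF l(2) _ l(1) l'] by blast
      then show ?thesis using False by simp
    qed
  qed
  also have "\<dots> = 1" using l D by simp
  finally show ?thesis using z by simp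
next
  case False
  have z: "(\<Sum>l\<in>D. indicator (E1 D l) p :: real) = 0"
  proof (intro sum.neutral ballI)
    fix l assume "l \<in> D"
    have "p \<notin> E1 D l" using False E1_sub[of p D l] by blast
    then show "indicator (E1 D l) p = (0::real)" by simp
  qed
  define j where "j = Min {j\<in>D. j \<notin> J' p}"
  have ne: "{j\<in>D. j \<notin> J' p} \<noteq> {}" using False by auto
  have jin: "j \<in> D" "j \<notin> J' p" using Min_in[OF _ ne] D unfolding j_def by auto
  have pj: "p \<in> E0 D j" unfolding E0_def
  proof (intro CollectI conjI ballI impI)
    show "j \<notin> J' p" by (rule jin(2))
    fix i assume i: "i \<in> D" "i < j"
    show "i \<in> J' p"
    proof (rule ccontr)
      assume "i \<notin> J' p"
      then have "j \<le> i" unfolding j_def using D(1) i(1) by (intro Min_le) auto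
      then show False using i(2) by simp
    qed
  qed
  have "(\<Sum>j'\<in>D. indicator (E0 D j') p :: real) = (\<Sum>j'\<in>D. if j' = j then 1 else 0)"
  proof (intro sum.cong refl)
    fix j' assume "j' \<in> D"
    show "indicator (E0 D j') p = (if j' = j then 1 else (0::real))"
    proof (cases "j' = j")
      case True then show ?thesis using pj by simp
    next
      case False
      have "p \<notin> E0 D j'"
      proof
        assume pj': "p \<in> E0 D j'"
        show False
        proof (cases "j' < j")
          case True
          have "j' \<in> J' p" using pj True \<open>j' \<in> D\<close> unfolding E0_def by blast
          moreover have "j' \<notin> J' p" using pj' unfolding E0_def by blast
          ultimately show False by blast
        next
          case False2: False
          then have "j < j'" using \<open>j' \<noteq> j\<close> by simp
          then have "j \<in> J' p" using pj' jin(1) unfolding E0_def by blast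
          then show False using jin(2) by blast
        qed
      qed
      then show ?thesis using False by simp
    qed
  qed
  also have "\<dots> = 1" using jin D by simp
  finally show ?thesis using z by simp
qed

end


context alg begin

lemma L2:
  assumes S: "finite S" "finite S'" "S \<noteq> S'" "card S = card S'"
  shows "(\<integral>p. chi S (snd p) * chi S' (snd p) * (indicator {p. S \<inter> J' p \<noteq> {}} p * indicator {p. S' \<inter> J' p \<noteq> {}} p) \<partial>Joint) = 0"
proof -
  define D where "D = (S - S') \<union> (S' - S)"
  have D: "finite D" "D \<noteq> {}" using S by (auto simp: D_def)
  have nS: "S - S' \<noteq> {}"
  proof
    assume "S - S' = {}" then have "S \<subseteq> S'" by auto
    then show False using S card_subset_eq by metis
  qed
  have nS': "S' - S \<noteq> {}"
  proof
    assume "S' - S = {}" then have "S' \<subseteq> S" by auto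
    then show False using S card_subset_eq by metis
  qed
  define Z where "Z p = chi S (snd p) * chi S' (snd p) * (indicator {p. S \<inter> J' p \<noteq> {}} p * indicator {p. S' \<inter> J' p \<noteq> {}} p)" for p
  have Zm: "Z \<in> borel_measurable Joint" unfolding Z_def
    by (intro borel_measurable_times chisnd_meas borel_measurable_indicator sets_hit S)
  have Zb: "\<bar>Z p\<bar> \<le> 1" for p unfolding Z_def abs_mult abs_chi by (auto simp: indicator_def)
  have intg: "integrable Joint (\<lambda>p. indicator A p * Z p)" if "A \<in> sets Joint" for A
    by (rule bint[of _ 1]) (use Zm that Zb in \<open>auto simp: indicator_def abs_mult\<close>)
  have chiF: "chi S (snd (Fl j p)) * chi S' (snd (Fl j p)) = - (chi S (snd p) * chi S' (snd p))" if "j \<in> D" for j p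
    using chi_pair_fl[OF S(1,2), of j "snd p"] that by (simp add: D_def Fl_def)
  have Zsplit: "Z p = (\<Sum>j\<in>D. indicator (E0 D j) p * Z p) + (\<Sum>l\<in>D. indicator (E1 D l) p * Z p)" for p
    using partition_sum[OF D, of p] by (simp add: sum_distrib_right[symmetric] distrib_right[symmetric])
  have I0: "(\<integral>p. indicator (E0 D j) p * Z p \<partial>Joint) = 0" if j: "j \<in> D" for j
  proof (rule flip_zero[where j = j, OF Zm sets_E0[OF D(1)]])
    fix p assume p: "p \<in> E0 D j"
    then have "j \<notin> J' p" by (simp add: E0_def)
    then show "Fl j p \<in> E0 D j" using p J'_Fl by (simp add: E0_def)
  next
    show "AE p in Joint. p \<in> E0 D j \<longrightarrow> Z (Fl j p) = - Z p"
    proof (rule AE_I2, rule impI)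
      fix p assume p: "p \<in> E0 D j"
      then have "j \<notin> J' p" by (simp add: E0_def)
      then have "J' (Fl j p) = J' p" by (rule J'_Fl)
      then show "Z (Fl j p) = - Z p" unfolding Z_def using chiF[OF j, of p] by (simp add: indicator_def)
    qed
  qed
  have I1: "(\<integral>p. indicator (E1 D l) p * Z p \<partial>Joint) = 0" if l: "l \<in> D" for l
  proof (rule flip_zero[where j = l, OF Zm sets_E1])
    fix p assume p: "p \<in> E1 D l"
    then show "Fl l p \<in> E1 D l" by (rule E1_Fl)
  next
    show "AE p in Joint. p \<in> E1 D l \<longrightarrow> Z (Fl l p) = - Z p"
    proof (rule AE_I2, rule impI)
      fix p assume p: "p \<in> E1 D l"
      have s1: "D \<subseteq> J' p" using p by (rule E1_sub)
      have s2: "D \<subseteq> J' (Fl l p)" using E1_Fl[OF p] by (rule E1_sub)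
      have h: "S \<inter> J' q \<noteq> {}" "S' \<inter> J' q \<noteq> {}" if "D \<subseteq> J' q" for q
        using that nS nS' by (auto simp: D_def)
      show "Z (Fl l p) = - Z p" unfolding Z_def using chiF[OF l, of p] h[OF s1] h[OF s2] by simp
    qed
  qed
  have "(\<integral>p. Z p \<partial>Joint) = (\<integral>p. (\<Sum>j\<in>D. indicator (E0 D j) p * Z p) + (\<Sum>l\<in>D. indicator (E1 D l) p * Z p) \<partial>Joint)"
    by (subst Zsplit) simp
  also have "\<dots> = (\<Sum>j\<in>D. \<integral>p. indicator (E0 D j) p * Z p \<partial>Joint) + (\<Sum>l\<in>D. \<integral>p. indicator (E1 D l) p * Z p \<partial>Joint)"
    using intg sets_E0[OF D(1)] sets_E1 by (simp add: integral_sum integrable_sum)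
  also have "\<dots> = 0" using I0 I1 by simp
  finally show ?thesis unfolding Z_def .
qed

end


context alg begin

definition dlt :: real where
  "dlt = (SUP i. measure Joint {p \<in> space Joint. i \<in> revealed f nx (fst p) (snd p)})"

lemma f_pm: "f \<omega> = -1 \<or> f \<omega> = 1" using bf by (auto simp: boolean_function_def)

lemma f_abs: "\<bar>f \<omega>\<bar> = 1" using f_pm[of \<omega>] by auto

lemma f_sq: "f \<omega> * f \<omega> = 1" using f_pm[of \<omega>] by auto

lemma fourier_hit:
  assumes va: "AE p in Joint. \<exists>n. witness f (queried nx (fst p) (snd p) n) (snd p)"
    and S: "finite S" "S \<noteq> {}"
  shows "fourier f S = (\<integral>p. indicator {p. S \<inter> J' p \<noteq> {}} p * (f (snd p) * chi S (snd p)) \<partial>Joint)"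
proof -
  define g where "g p = f (snd p) * chi S (snd p)" for p :: "(nat \<Rightarrow> bool) \<times> (nat \<Rightarrow> bool)"
  have gm: "g \<in> borel_measurable Joint" unfolding g_def by (intro borel_measurable_times fsnd_meas chisnd_meas)
  have gb: "\<bar>g p\<bar> \<le> 1" for p unfolding g_def abs_mult f_abs abs_chi by simp
  have i1: "integrable Joint (\<lambda>p. indicator A p * g p)" if "A \<in> sets Joint" for A
    by (rule bint[of _ 1]) (use gm that gb in \<open>auto simp: indicator_def abs_mult\<close>)
  have "fourier f S = (\<integral>p. g p \<partial>Joint)"
    unfolding fourier_def g_def by (rule integral_snd_Joint[symmetric]) (intro borel_measurable_times fm chi_meas)
  also have "\<dots> = (\<integral>p. indicator {p. S \<inter> J' p \<noteq> {}} p * g p + indicator {p. S \<inter> J' p = {}} p * g p \<partial>Joint)"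
    by (rule Bochner_Integration.integral_cong) (auto simp: indicator_def)
  also have "\<dots> = (\<integral>p. indicator {p. S \<inter> J' p \<noteq> {}} p * g p \<partial>Joint) + (\<integral>p. indicator {p. S \<inter> J' p = {}} p * g p \<partial>Joint)"
    by (rule Bochner_Integration.integral_add) (intro i1 sets_hit sets_nohit S)+
  also have "(\<integral>p. indicator {p. S \<inter> J' p = {}} p * g p \<partial>Joint) = 0"
    unfolding g_def by (rule L1[OF va S])
  finally show ?thesis unfolding g_def by simp
qed

lemma prob_J'_le:
  assumes va: "AE p in Joint. \<exists>n. witness f (queried nx (fst p) (snd p) n) (snd p)"
    and rm: "\<And>i. {p \<in> space Joint. i \<in> revealed f nx (fst p) (snd p)} \<in> sets Joint"
  shows "measure Joint {p. i \<in> J' p} \<le> dlt"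
proof -
  interpret P: prob_space Joint by (rule prob_Joint)
  have "measure Joint {p. i \<in> J' p} = measure Joint {p \<in> space Joint. i \<in> revealed f nx (fst p) (snd p)}"
  proof (rule measure_eq_AE)
    show "AE x in Joint. (x \<in> {p. i \<in> J' p}) = (x \<in> {p \<in> space Joint. i \<in> revealed f nx (fst p) (snd p)})"
      using AE_good[OF va] by eventually_elim (simp add: good_revealed)
  qed (use sets_J' rm in auto)
  also have "\<dots> \<le> dlt" unfolding dlt_def
    by (rule cSUP_upper) (auto intro!: bdd_aboveI[of _ 1] P.prob_le_1)
  finally show ?thesis .
qed

lemma dlt_nonneg:
  assumes va: "AE p in Joint. \<exists>n. witness f (queried nx (fst p) (snd p) n) (snd p)"
    and rm: "\<And>i. {p \<in> space Joint. i \<in> revealed f nx (fst p) (snd p)} \<in> sets Joint"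
  shows "0 \<le> dlt"
  using prob_J'_le[OF va rm, of 0] measure_nonneg[of Joint "{p. 0 \<in> J' p}"] by linarith

lemma hit_le:
  assumes va: "AE p in Joint. \<exists>n. witness f (queried nx (fst p) (snd p) n) (snd p)"
    and rm: "\<And>i. {p \<in> space Joint. i \<in> revealed f nx (fst p) (snd p)} \<in> sets Joint"
    and S: "finite S"
  shows "measure Joint {p. S \<inter> J' p \<noteq> {}} \<le> card S * dlt"
proof -
  interpret P: prob_space Joint by (rule prob_Joint)
  have "{p. S \<inter> J' p \<noteq> {}} = (\<Union>i\<in>S. {p. i \<in> J' p})" by auto
  then have "measure Joint {p. S \<inter> J' p \<noteq> {}} \<le> (\<Sum>i\<in>S. measure Joint {p. i \<in> J' p})"
    using S sets_J' by (simp add: P.finite_measure_subadditive_finite image_subset_iff)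
  also have "\<dots> \<le> (\<Sum>i\<in>S. dlt)" by (intro sum_mono prob_J'_le[OF va rm])
  finally show ?thesis by simp
qed

end


lemma sq_int_le:
  fixes g :: "_ \<Rightarrow> real"
  assumes "integrable Joint g" "integrable Joint (\<lambda>p. g p * g p)"
  shows "(\<integral>p. g p \<partial>Joint)^2 \<le> (\<integral>p. g p * g p \<partial>Joint)"
proof -
  interpret P: prob_space Joint by (rule prob_Joint)
  have "0 \<le> P.variance g" by (intro Bochner_Integration.integral_nonneg) simp
  also have "P.variance g = P.expectation (\<lambda>x. (g x)\<^sup>2) - (P.expectation g)\<^sup>2"
    using assms by (intro P.variance_eq) (auto simp: power2_eq_square)
  finally show ?thesis by (simp add: power2_eq_square)
qed

context alg begin

lemma finite_bound:
  assumes va: "AE p in Joint. \<exists>n. witness f (queried nx (fst p) (snd p) n) (snd p)"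
    and rm: "\<And>i. {p \<in> space Joint. i \<in> revealed f nx (fst p) (snd p)} \<in> sets Joint"
    and k: "k \<ge> 1" and F: "finite F" "F \<subseteq> {S. finite S \<and> card S = k}"
  shows "(\<Sum>S\<in>F. (fourier f S)\<^sup>2) \<le> real k * dlt"
proof -
  interpret P: prob_space Joint by (rule prob_Joint)
  define c where "c S = fourier f S" for S
  define a where "a = (\<Sum>S\<in>F. (c S)\<^sup>2)"
  define ind where "ind S p = (indicator {p. S \<inter> J' p \<noteq> {}} p :: real)" for S p
  define Hf where "Hf p = (\<Sum>S\<in>F. c S * chi S (snd p) * ind S p)" for p
  have SF: "finite S" "card S = k" "S \<noteq> {}" if "S \<in> F" for S using F that k by auto
  have indm: "(ind S) \<in> borel_measurable Joint" if "S \<in> F" for S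
    unfolding ind_def[abs_def] using SF[OF that] by (intro borel_measurable_indicator sets_hit)
  have indb: "\<bar>ind S p\<bar> \<le> 1" for S p by (simp add: ind_def indicator_def)
  define Y where "Y S p = f (snd p) * chi S (snd p) * ind S p" for S p
  have Ym: "Y S \<in> borel_measurable Joint" if "S \<in> F" for S
    unfolding Y_def[abs_def] by (intro borel_measurable_times fsnd_meas chisnd_meas indm that)
  have Yi: "integrable Joint (Y S)" if "S \<in> F" for S
    by (rule bint[OF Ym[OF that], of 1]) (simp add: Y_def abs_mult f_abs abs_chi indb)
  have cY: "c S = (\<integral>p. Y S p \<partial>Joint)" if "S \<in> F" for S
    unfolding c_def Y_def ind_def using fourier_hit[OF va SF(1,3)[OF that]] by (simp add: mult_ac)
  define B where "B = (\<Sum>S\<in>F. \<bar>c S\<bar>)"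
  have Hm: "Hf \<in> borel_measurable Joint" unfolding Hf_def[abs_def]
    by (intro borel_measurable_sum borel_measurable_times borel_measurable_const chisnd_meas indm) auto
  have Hb: "\<bar>Hf p\<bar> \<le> B" for p
  proof -
    have "\<bar>Hf p\<bar> \<le> (\<Sum>S\<in>F. \<bar>c S * chi S (snd p) * ind S p\<bar>)" unfolding Hf_def by (rule sum_abs)
    also have "\<dots> \<le> B" unfolding B_def
      by (intro sum_mono) (simp add: abs_mult abs_chi mult_left_le indb)
    finally show ?thesis .
  qed
  define g where "g p = f (snd p) * Hf p" for p
  have gm: "g \<in> borel_measurable Joint" unfolding g_def[abs_def] by (intro borel_measurable_times fsnd_meas Hm)
  have gi: "integrable Joint g" by (rule bint[OF gm, of B]) (simp add: g_def abs_mult f_abs Hb)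
  have gb: "\<bar>g p\<bar> \<le> B" for p by (simp add: g_def abs_mult f_abs Hb)
  have ggb: "\<bar>g p * g p\<bar> \<le> B * B" for p
    unfolding abs_mult by (rule mult_mono[OF gb gb]) (use gb[of p] in auto)
  have ggi: "integrable Joint (\<lambda>p. g p * g p)"
    by (rule bint[of _ "B * B"]) (use gm ggb in \<open>auto intro!: borel_measurable_times\<close>)
  have "(\<integral>p. g p \<partial>Joint) = (\<integral>p. (\<Sum>S\<in>F. c S * Y S p) \<partial>Joint)"
    by (rule Bochner_Integration.integral_cong) (auto simp: g_def Hf_def Y_def sum_distrib_left mult_ac)
  also have "\<dots> = (\<Sum>S\<in>F. (\<integral>p. c S * Y S p \<partial>Joint))"
    by (rule Bochner_Integration.integral_sum) (use Yi in auto)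
  also have "\<dots> = (\<Sum>S\<in>F. c S * (\<integral>p. Y S p \<partial>Joint))" by simp
  also have "\<dots> = a" unfolding a_def using cY by (simp add: power2_eq_square)
  finally have ga: "(\<integral>p. g p \<partial>Joint) = a" .
  define X where "X S S' p = chi S (snd p) * chi S' (snd p) * (ind S p * ind S' p)" for S S' p
  have Xm: "X S S' \<in> borel_measurable Joint" if "S \<in> F" "S' \<in> F" for S S'
    unfolding X_def[abs_def] by (intro borel_measurable_times chisnd_meas indm that)
  have Xi: "integrable Joint (X S S')" if "S \<in> F" "S' \<in> F" for S S'
    by (rule bint[OF Xm[OF that], of 1]) (simp add: X_def abs_mult abs_chi indb mult_le_one)
  have Xint: "(\<integral>p. X S S' p \<partial>Joint) = (if S = S' then measure Joint {p. S \<inter> J' p \<noteq> {}} else 0)"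
    if "S \<in> F" "S' \<in> F" for S S'
  proof (cases "S = S'")
    case True
    have "(\<integral>p. X S S' p \<partial>Joint) = (\<integral>p. indicator {p. S \<inter> J' p \<noteq> {}} p \<partial>Joint)"
      by (rule Bochner_Integration.integral_cong) (auto simp: X_def True ind_def chi_sq indicator_def)
    also have "\<dots> = measure Joint {p. S \<inter> J' p \<noteq> {}}"
      using sets_hit[OF SF(1)[OF that(1)]] by (simp add: P.emeasure_finite)
    finally show ?thesis using True by simp
  next
    case False
    then show ?thesis unfolding X_def ind_def using L2[OF SF(1)[OF that(1)] SF(1)[OF that(2)] False] SF(2)[OF that(1)] SF(2)[OF that(2)] by simp
  qed
  have "(\<integral>p. g p * g p \<partial>Joint) = (\<integral>p. Hf p * Hf p \<partial>Joint)"
    by (rule Bochner_Integration.integral_cong) (auto simp: g_def f_sq mult_ac)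
  also have "\<dots> = (\<integral>p. (\<Sum>S\<in>F. \<Sum>S'\<in>F. (c S * c S') * X S S' p) \<partial>Joint)"
    by (rule Bochner_Integration.integral_cong) (auto simp: Hf_def X_def sum_product mult_ac)
  also have "\<dots> = (\<Sum>S\<in>F. \<Sum>S'\<in>F. (c S * c S') * (\<integral>p. X S S' p \<partial>Joint))"
    using Xi by (simp add: Bochner_Integration.integral_sum integrable_sum)
  also have "\<dots> = (\<Sum>S\<in>F. (c S)\<^sup>2 * measure Joint {p. S \<inter> J' p \<noteq> {}})"
  proof (rule sum.cong[OF refl])
    fix S assume S: "S \<in> F"
    have "(\<Sum>S'\<in>F. (c S * c S') * (\<integral>p. X S S' p \<partial>Joint)) = (\<Sum>S'\<in>F. if S' = S then (c S * c S) * measure Joint {p. S \<inter> J' p \<noteq> {}} else 0)"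
      by (rule sum.cong[OF refl]) (auto simp: Xint S)
    also have "\<dots> = (c S)\<^sup>2 * measure Joint {p. S \<inter> J' p \<noteq> {}}" using S F(1) by (simp add: power2_eq_square)
    finally show "(\<Sum>S'\<in>F. (c S * c S') * (\<integral>p. X S S' p \<partial>Joint)) = (c S)\<^sup>2 * measure Joint {p. S \<inter> J' p \<noteq> {}}" .
  qed
  also have "\<dots> \<le> (\<Sum>S\<in>F. (c S)\<^sup>2 * (real k * dlt))"
    by (intro sum_mono mult_left_mono) (use hit_le[OF va rm] SF in auto)
  also have "\<dots> = real k * dlt * a" unfolding a_def by (simp add: sum_distrib_right sum_distrib_left mult_ac)
  finally have gg: "(\<integral>p. g p * g p \<partial>Joint) \<le> real k * dlt * a" .
  have "a\<^sup>2 \<le> real k * dlt * a" using sq_int_le[OF gi ggi] ga gg by simp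
  moreover have "0 \<le> a" unfolding a_def by (simp add: sum_nonneg)
  moreover have "0 \<le> real k * dlt" using dlt_nonneg[OF va rm] by simp
  ultimately have "a \<le> real k * dlt"
    by (metis less_eq_real_def mult_le_cancel_right power2_eq_square zero_less_mult_iff)
  then show ?thesis unfolding a_def c_def .
qed

end


lemma sets_witness:
  assumes bf: "boolean_function f" and W: "finite W"
  shows "{\<omega>. witness f W \<omega>} \<in> sets Cube"
proof -
  have fm[measurable]: "f \<in> borel_measurable Cube" using bf by (simp add: boolean_function_def)
  define M where "M \<sigma> v \<longleftrightarrow> measure Cube {\<omega>'. (\<forall>i\<in>W. \<omega>' i = \<sigma> i) \<and> f \<omega>' \<noteq> v} = 0" for \<sigma> :: "nat \<Rightarrow> bool" and v :: real
  have eq: "{\<omega>. witness f W \<omega>} = (\<Union>\<sigma>\<in>PiE W (\<lambda>_. UNIV). \<Union>v\<in>{-1, 1}. (if M \<sigma> v then {\<omega> \<in> space Cube. (\<forall>i\<in>W. \<omega> i = \<sigma> i) \<and> f \<omega> = v} else {}))"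
  proof (intro set_eqI iffI)
    fix \<omega> assume "\<omega> \<in> {\<omega>. witness f W \<omega>}"
    then have w: "M (restrict \<omega> W) (f \<omega>)" using witness_char[OF bf W, of \<omega>] by (simp add: M_def)
    have "f \<omega> \<in> {-1, 1}" using bf by (auto simp: boolean_function_def)
    then show "\<omega> \<in> (\<Union>\<sigma>\<in>PiE W (\<lambda>_. UNIV). \<Union>v\<in>{-1, 1}. (if M \<sigma> v then {\<omega> \<in> space Cube. (\<forall>i\<in>W. \<omega> i = \<sigma> i) \<and> f \<omega> = v} else {}))"
      using w by (intro UN_I[of "restrict \<omega> W"]) (auto simp: PiE_iff)
  next
    fix \<omega> assume "\<omega> \<in> (\<Union>\<sigma>\<in>PiE W (\<lambda>_. UNIV). \<Union>v\<in>{-1, 1}. (if M \<sigma> v then {\<omega> \<in> space Cube. (\<forall>i\<in>W. \<omega> i = \<sigma> i) \<and> f \<omega> = v} else {}))"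
    then obtain \<sigma> v where "M \<sigma> v" "\<forall>i\<in>W. \<omega> i = \<sigma> i" "f \<omega> = v" by (auto split: if_splits)
    then have "measure Cube {\<omega>'. (\<forall>i\<in>W. \<omega>' i = \<omega> i) \<and> f \<omega>' \<noteq> f \<omega>} = 0" unfolding M_def by simp
    then show "\<omega> \<in> {\<omega>. witness f W \<omega>}" using witness_char[OF bf W, of \<omega>] by simp
  qed
  have "{\<omega> \<in> space Cube. (\<forall>i\<in>W. \<omega> i = \<sigma> i) \<and> f \<omega> = v} \<in> sets Cube" for \<sigma> v using W by measurable
  then show ?thesis unfolding eq using W by (intro sets.finite_UN) (auto simp: finite_PiE)
qed

definition nx0 :: algorithm where "nx0 r h = length h"

lemma queried_nx0: "queried nx0 r \<omega> n = {..<n}"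
  by (induction n) (auto simp: queried_Suc nx0_def lessThan_Suc)

lemma valid_nx0:
  assumes bf: "boolean_function f" and fin: "finitary f"
  shows "valid_algorithm f nx0"
  unfolding valid_algorithm_def
proof (intro conjI allI)
  fix h show "(\<lambda>r. nx0 r h) \<in> measurable Cube (count_space UNIV)" by (simp add: nx0_def)
next
  have "AE \<omega> in Cube. \<exists>n. witness f {..<n} \<omega>"
    using fin unfolding finitary_def
  proof eventually_elim
    case (elim \<omega>)
    then obtain W where "finite W" "witness f W \<omega>" by blast
    then obtain n where "W \<subseteq> {..<n}" using finite_nat_bounded by blast
    then show ?case using witness_mono \<open>witness f W \<omega>\<close> by blast
  qed
  then have "AE p in distr Joint Cube snd. \<exists>n. witness f {..<n} p" by (subst distr_snd_Joint)
  then have "AE p in Joint. \<exists>n. witness f {..<n} (snd p)" by (rule AE_distrD[rotated]) (simp add: Joint_def)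
  then show "AE p in Joint. \<exists>n. witness f (queried nx0 (fst p) (snd p) n) (snd p)" by (simp add: queried_nx0)
next
  fix i
  define T where "T \<omega> = (LEAST n. witness f {..<n} \<omega>)" for \<omega>
  have pw: "(\<lambda>\<omega>. witness f {..<n} \<omega>) \<in> measurable Cube (count_space UNIV)" for n
  proof -
    have "{\<omega> \<in> space Cube. witness f {..<n} \<omega>} \<in> sets Cube" using sets_witness[OF bf, of "{..<n}"] by simp
    from pred_sets1[OF this measurable_ident] show ?thesis by simp
  qed
  have Tm: "T \<in> measurable Cube (count_space UNIV)" unfolding T_def[abs_def] by (rule measurable_Least[OF pw])
  have "(\<lambda>p. T (snd p)) \<in> measurable Joint (count_space UNIV)"
    unfolding Joint_def by (rule measurable_compose[OF measurable_snd Tm])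
  then have "(\<lambda>p. i < T (snd p)) \<in> measurable Joint (count_space UNIV)"
    by (rule measurable_compose) simp
  then have "{p \<in> space Joint. i < T (snd p)} \<in> sets Joint" by measurable
  moreover have "revealed f nx0 (fst p) (snd p) = {..<T (snd p)}" for p
    by (simp add: revealed_def stop_time_def queried_nx0 T_def)
  ultimately show "{p \<in> space Joint. i \<in> revealed f nx0 (fst p) (snd p)} \<in> sets Joint" by simp
qed

theorem mainTheorem19:
  fixes f :: "(nat \<Rightarrow> bool) \<Rightarrow> real" and k :: nat
  assumes "boolean_function f" and "finitary f" and "k \<ge> 1"
  shows "(\<Sum>\<^sub>\<infinity> S\<in>{S. finite S \<and> card S = k}. ennreal ((fourier f S)\<^sup>2))
           \<le> ennreal (revealment f * real k * (\<integral>\<omega>. (f \<omega>)\<^sup>2 \<partial>Cube))"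
proof -
  note bf = assms(1) and k = assms(3)
  interpret C: prob_space Cube by (rule prob_Cube)
  have fsq: "(f \<omega>)\<^sup>2 = 1" for \<omega>
  proof -
    have "f \<omega> = -1 \<or> f \<omega> = 1" using bf by (auto simp: boolean_function_def)
    then show ?thesis by auto
  qed
  have int1: "(\<integral>\<omega>. (f \<omega>)\<^sup>2 \<partial>Cube) = 1" using C.prob_space by (simp add: fsq)
  define V where "V = {nx. valid_algorithm f nx}"
  have Vne: "V \<noteq> {}" using valid_nx0[OF assms(1,2)] by (auto simp: V_def)
  have fin: "(\<Sum>S\<in>F. (fourier f S)\<^sup>2) \<le> real k * revealment f"
    if F: "finite F" "F \<subseteq> {S. finite S \<and> card S = k}" for F :: "nat set set"
  proof -
    define a where "a = (\<Sum>S\<in>F. (fourier f S)\<^sup>2)"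
    have kpos: "real k > 0" using k by simp
    have "a / real k \<le> (SUP i. measure Joint {p \<in> space Joint. i \<in> revealed f nx (fst p) (snd p)})"
      if nx: "nx \<in> V" for nx
    proof -
      have va: "valid_algorithm f nx" using nx by (simp add: V_def)
      interpret A: alg f nx
        using bf va by unfold_locales (simp_all add: valid_algorithm_def)
      have "a \<le> real k * A.dlt"
        unfolding a_def
        by (rule A.finite_bound[OF _ _ k F]) (use va in \<open>simp_all add: valid_algorithm_def\<close>)
      then have "a / real k \<le> A.dlt" using kpos by (simp add: divide_le_eq mult.commute)
      then show ?thesis by (simp add: A.dlt_def)
    qed
    then have "a / real k \<le> revealment f"
      unfolding revealment_def V_def[symmetric] by (intro cINF_greatest Vne) auto
    then show ?thesis using kpos unfolding a_def by (simp add: divide_le_eq mult.commute)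
  qed
  show ?thesis
  proof (rule infsum_le_finite_sums)
    show "(\<lambda>S. ennreal ((fourier f S)\<^sup>2)) summable_on {S. finite S \<and> card S = k}" by (rule nonneg_summable_on_complete) simp
    fix F :: "nat set set" assume F: "finite F" "F \<subseteq> {S. finite S \<and> card S = k}"
    have "(\<Sum>S\<in>F. ennreal ((fourier f S)\<^sup>2)) = ennreal (\<Sum>S\<in>F. (fourier f S)\<^sup>2)" by simp
    also have "\<dots> \<le> ennreal (revealment f * real k * (\<integral>\<omega>. (f \<omega>)\<^sup>2 \<partial>Cube))"
      using fin[OF F] by (intro ennreal_leI) (simp add: int1 mult.commute)
    finally show "(\<Sum>S\<in>F. ennreal ((fourier f S)\<^sup>2)) \<le> ennreal (revealment f * real k * (\<integral>\<omega>. (f \<omega>)\<^sup>2 \<partial>Cube))" .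
  qed
qed

end
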